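(* Let $(B,\lfloor\cdot,\cdot\rfloor,\|\cdot\|)$ be an SSDB space with quadratic form $q$ and let $A\subset B$ be $q$-positive. The following are equivalent: (1) $A$ is maximally $q$-positive; (2) $A+C=B$ for every maximally $(-q)$-positive set $C\subset B$ such that $\Phi_{-q,C}$ is finite-valued; (3) there exist a set $C\subset B$ with $A+C=B$ and a point $p\in C$ such that $q(z-p)<0$ for all $z\in C\setminus\{p\}$.
   Context: An SSD space is a pair $(B,\lfloor\cdot,\cdot\rfloor)$ with $B$ a nonzero real vector space and $\lfloor\cdot,\cdot\rfloor$ a symmetric bilinear form; $q(b)=\frac12\lfloor b,b\rfloor$. An SSDB space is a triple $(B,\lfloor\cdot,\cdot\rfloor,\|\cdot\|)$ such that $(B,\lfloor\cdot,\cdot\rfloor)$ is an SSD space, $(B,\|\cdot\|)$ is a Banach space, and the map $i:B\to B^*$, $i(b)=\lfloor\cdot,b\rfloor$, is a surjective isometry onto the dual $B^*$. For a quadratic form $Q\in\{q,-q\}$ (note $-q$ is the quadratic form of the SSD space $(B,-\lfloor\cdot,\cdot\rfloor)$): a nonempty set $A$ is $Q$-positive if $Q(b-c)\ge0$ for all $b,c\in A$, and maximally $Q$-positive if it is $Q$-positive and not properly contained in another $Q$-positive set. For nonempty $C\subset B$, $\Phi_{-q,C}(x)=\sup_{c\in C}\{-\lfloor x,c\rfloor+q(c)\}$. *)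

theory Defs
  imports "HOL-Analysis.Analysis"
begin

definition SSD :: "('a::real_vector \<Rightarrow> 'a \<Rightarrow> real) \<Rightarrow> bool" where
  "SSD s \<longleftrightarrow> (\<exists>x::'a. x \<noteq> 0) \<and> bilinear s \<and> (\<forall>x y. s x y = s y x)"

text \<open>SSDB space: additionally the Banach space structure (type class banach) is such that
  i(b) = s(_, b) is a surjective isometry of B onto its dual B* (the bounded linear functionals,
  normed by the operator norm).\<close>
definition SSDB :: "('a::banach \<Rightarrow> 'a \<Rightarrow> real) \<Rightarrow> bool" where
  "SSDB s \<longleftrightarrow> SSD s
     \<and> (\<forall>b. bounded_linear (\<lambda>x. s x b))
     \<and> (\<forall>b. onorm (\<lambda>x. s x b) = norm b)
     \<and> (\<forall>f::'a \<Rightarrow> real. bounded_linear f \<longrightarrow> (\<exists>b. f = (\<lambda>x. s x b)))"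

definition qform :: "('a \<Rightarrow> 'a \<Rightarrow> real) \<Rightarrow> 'a \<Rightarrow> real" where
  "qform s b = s b b / 2"

definition Q_positive :: "('a::real_vector \<Rightarrow> real) \<Rightarrow> 'a set \<Rightarrow> bool" where
  "Q_positive Q A \<longleftrightarrow> A \<noteq> {} \<and> (\<forall>b\<in>A. \<forall>c\<in>A. Q (b - c) \<ge> 0)"

definition max_Q_positive :: "('a::real_vector \<Rightarrow> real) \<Rightarrow> 'a set \<Rightarrow> bool" where
  "max_Q_positive Q A \<longleftrightarrow> Q_positive Q A \<and> (\<forall>A'. Q_positive Q A' \<and> A \<subseteq> A' \<longrightarrow> A' = A)"

definition Phi_negq :: "('a \<Rightarrow> 'a \<Rightarrow> real) \<Rightarrow> 'a set \<Rightarrow> 'a \<Rightarrow> ereal" where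
  "Phi_negq s C x = (SUP c\<in>C. ereal (- s x c + qform s c))"

definition setsum :: "'a::plus set \<Rightarrow> 'a set \<Rightarrow> 'a set" where
  "setsum A C = {a + c | a c. a \<in> A \<and> c \<in> C}"

end

theory Submission
  imports Defs
begin

definition cvx :: "('a::real_vector \<Rightarrow> real) \<Rightarrow> bool" where
  "cvx \<phi> \<longleftrightarrow> (\<forall>x y u. 0 \<le> u \<and> u \<le> 1 \<longrightarrow> \<phi> ((1-u) *\<^sub>R x + u *\<^sub>R y) \<le> (1-u) * \<phi> x + u * \<phi> y)"

definition lingraph :: "('a::real_vector \<Rightarrow> real) \<Rightarrow> ('a \<times> real) set \<Rightarrow> bool" where
  "lingraph \<phi> G \<longleftrightarrow> (0,0) \<in> G \<and> (\<forall>x u v. (x,u)\<in>G \<longrightarrow> (x,v)\<in>G \<longrightarrow> u=v)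
     \<and> (\<forall>x u y v. (x,u)\<in>G \<longrightarrow> (y,v)\<in>G \<longrightarrow> (x+y,u+v)\<in>G)
     \<and> (\<forall>c x u. (x,u)\<in>G \<longrightarrow> (c *\<^sub>R x, c*u)\<in>G)
     \<and> (\<forall>x u. (x,u)\<in>G \<longrightarrow> u \<le> \<phi> x - \<phi> 0)"

lemma lingraph_0: "lingraph \<phi> G \<Longrightarrow> (0,0) \<in> G" unfolding lingraph_def by blast
lemma lingraph_fun: "lingraph \<phi> G \<Longrightarrow> (x,u)\<in>G \<Longrightarrow> (x,v)\<in>G \<Longrightarrow> u=v" unfolding lingraph_def by blast
lemma lingraph_add: "lingraph \<phi> G \<Longrightarrow> (x,u)\<in>G \<Longrightarrow> (y,v)\<in>G \<Longrightarrow> (x+y,u+v)\<in>G" unfolding lingraph_def by blast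
lemma lingraph_sc: "lingraph \<phi> G \<Longrightarrow> (x,u)\<in>G \<Longrightarrow> (c *\<^sub>R x, c*u)\<in>G" unfolding lingraph_def by blast
lemma lingraph_dom: "lingraph \<phi> G \<Longrightarrow> (x,u)\<in>G \<Longrightarrow> u \<le> \<phi> x - \<phi> 0" unfolding lingraph_def by blast

lemma lingraph_key:
  fixes \<phi> :: "'a::real_vector \<Rightarrow> real"
  assumes L: "lingraph \<phi> G" and C: "cvx \<phi>"
    and g1: "(m1,u1)\<in>G" and g2: "(m2,u2)\<in>G" and s: "s>0" and t: "t>0"
  shows "(\<phi> 0 + u1 - \<phi>(m1 - s *\<^sub>R x0))/s \<le> (\<phi>(m2 + t *\<^sub>R x0) - \<phi> 0 - u2)/t"
proof -
  define u where "u = s/(s+t)"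
  have u01: "0 \<le> u" "u \<le> 1" using s t by (auto simp: u_def)
  have 1: "1 - u = t/(s+t)" using s t by (simp add: u_def field_simps)
  define m where "m = (1-u) *\<^sub>R m1 + u *\<^sub>R m2"
  define w where "w = (1-u) * u1 + u * u2"
  have "((1-u) *\<^sub>R m1, (1-u)*u1) \<in> G" "(u *\<^sub>R m2, u*u2) \<in> G"
    using L g1 g2 unfolding lingraph_def by blast+
  hence mw: "(m,w)\<in>G" using L unfolding lingraph_def m_def w_def by blast
  hence wle: "w \<le> \<phi> m - \<phi> 0" using L unfolding lingraph_def by blast
  have v: "(1-u) *\<^sub>R (m1 - s *\<^sub>R x0) + u *\<^sub>R (m2 + t *\<^sub>R x0) = m + (u * t - (1 - u) * s) *\<^sub>R x0"
    by (simp add: m_def algebra_simps)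
  have z: "u * t - (1 - u) * s = 0" using s t unfolding 1 by (simp add: u_def field_simps)
  have cv: "\<phi> ((1-u) *\<^sub>R (m1 - s *\<^sub>R x0) + u *\<^sub>R (m2 + t *\<^sub>R x0)) \<le> (1-u) * \<phi> (m1 - s *\<^sub>R x0) + u * \<phi>(m2 + t *\<^sub>R x0)"
    using C u01 unfolding cvx_def by blast
  have wl: "w \<le> (1-u) * \<phi> (m1 - s *\<^sub>R x0) + u * \<phi>(m2 + t *\<^sub>R x0) - \<phi> 0"
    using cv v z wle by simp
  have h1: "(s+t)*w \<le> (s+t) * ((1-u) * \<phi> (m1 - s *\<^sub>R x0) + u * \<phi>(m2 + t *\<^sub>R x0) - \<phi> 0)"
    using s t wl by (simp add: mult_left_mono)
  have a: "(s+t)*(1 - s/(s+t)) = t" "(s+t)*(s/(s+t)) = s" using s t by (simp_all add: field_simps)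
  have h2: "(s+t)*w = t*u1 + s*u2" unfolding w_def u_def
    by (simp only: distrib_left mult.assoc[symmetric] a)
  have h3: "(s+t) * ((1-u) * \<phi> (m1 - s *\<^sub>R x0) + u * \<phi>(m2 + t *\<^sub>R x0) - \<phi> 0)
     = t * \<phi> (m1 - s *\<^sub>R x0) + s * \<phi>(m2 + t *\<^sub>R x0) - (s+t)*\<phi> 0"
    unfolding u_def by (simp only: distrib_left right_diff_distrib mult.assoc[symmetric] a) (simp add: algebra_simps)
  have "t*u1 + s*u2 \<le> t * \<phi> (m1 - s *\<^sub>R x0) + s * \<phi>(m2 + t *\<^sub>R x0) - (s+t)*\<phi> 0"
    using h1 h2 h3 by linarith
  thus ?thesis using s t by (simp add: field_simps)
qed

lemma lingraph_extend:
  fixes \<phi> :: "'a::real_vector \<Rightarrow> real"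
  assumes L: "lingraph \<phi> G" and C: "cvx \<phi>" and x0: "\<forall>u. (x0,u) \<notin> G"
  shows "\<exists>G'. lingraph \<phi> G' \<and> G \<subseteq> G' \<and> G' \<noteq> G"
proof -
  define Lo where "Lo = {(\<phi> 0 + u - \<phi>(m - s *\<^sub>R x0))/s | m u s. (m,u)\<in>G \<and> s>0}"
  define c where "c = Sup Lo"
  have G0: "(0,0)\<in>G" using L unfolding lingraph_def by blast
  have "(\<phi> 0 + 0 - \<phi>(0 - 1 *\<^sub>R x0))/1 \<in> Lo" unfolding Lo_def using G0 zero_less_one by blast
  hence ne: "Lo \<noteq> {}" by blast
  have bd: "bdd_above Lo"
  proof (rule bdd_aboveI)
    fix x assume "x \<in> Lo"
    then obtain m u s where "x = (\<phi> 0 + u - \<phi>(m - s *\<^sub>R x0))/s" "(m,u)\<in>G" "s>0"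
      unfolding Lo_def by blast
    thus "x \<le> (\<phi>(0 + 1 *\<^sub>R x0) - \<phi> 0 - 0)/1"
      using lingraph_key[OF L C _ G0, of m u s 1 x0] by simp
  qed
  have lo: "(\<phi> 0 + u - \<phi>(m - s *\<^sub>R x0))/s \<le> c" if "(m,u)\<in>G" "s>0" for m u s
    unfolding c_def by (rule cSup_upper[OF _ bd]) (unfold Lo_def, use that in blast)
  have up: "c \<le> (\<phi>(m + t *\<^sub>R x0) - \<phi> 0 - u)/t" if "(m,u)\<in>G" "t>0" for m u t
    unfolding c_def
  proof (rule cSup_least[OF ne])
    fix x assume "x \<in> Lo"
    then obtain m' u' s where "x = (\<phi> 0 + u' - \<phi>(m' - s *\<^sub>R x0))/s" "(m',u')\<in>G" "s>0"
      unfolding Lo_def by blast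
    thus "x \<le> (\<phi>(m + t *\<^sub>R x0) - \<phi> 0 - u)/t"
      using lingraph_key[OF L C _ that(1), of m' u' s t x0] that by simp
  qed
  define G' where "G' = {(m + t *\<^sub>R x0, u + t*c) | m u t. (m,u)\<in>G}"
  have fnc: "(\<forall>x u v. (x,u)\<in>G \<longrightarrow> (x,v)\<in>G \<longrightarrow> u=v)"
   and add: "(\<forall>x u y v. (x,u)\<in>G \<longrightarrow> (y,v)\<in>G \<longrightarrow> (x+y,u+v)\<in>G)"
   and sc: "(\<forall>c x u. (x,u)\<in>G \<longrightarrow> (c *\<^sub>R x, c*u)\<in>G)"
   and dom: "(\<forall>x u. (x,u)\<in>G \<longrightarrow> u \<le> \<phi> x - \<phi> 0)" using L unfolding lingraph_def by blast+
  have "lingraph \<phi> G'"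
    unfolding lingraph_def
  proof (intro conjI allI impI)
    show "(0,0)\<in>G'" unfolding G'_def using G0 by force
  next
    fix x u v assume "(x,u)\<in>G'" "(x,v)\<in>G'"
    then obtain m1 u1 t1 m2 u2 t2 where h: "(m1,u1)\<in>G" "(m2,u2)\<in>G" "x = m1 + t1 *\<^sub>R x0"
      "u = u1 + t1*c" "x = m2 + t2 *\<^sub>R x0" "v = u2 + t2*c" unfolding G'_def by blast
    have "t1 = t2"
    proof (rule ccontr)
      assume ne: "t1 \<noteq> t2"
      have "(m1 + (-1) *\<^sub>R m2, u1 + (-1)*u2) \<in> G" using h add sc by blast
      hence "((1/(t2-t1)) *\<^sub>R (m1 + (-1) *\<^sub>R m2), (1/(t2-t1))*(u1 + (-1)*u2)) \<in> G" using sc by blast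
      moreover have "(1/(t2-t1)) *\<^sub>R (m1 + (-1) *\<^sub>R m2) = x0"
      proof -
        have "m1 - m2 = (t2 - t1) *\<^sub>R x0" using h by (simp add: algebra_simps)
        thus ?thesis using ne by simp
      qed
      ultimately show False using x0 by simp
    qed
    hence "m1 = m2" using h by simp
    thus "u = v" using fnc h \<open>t1 = t2\<close> by blast
  next
    fix x u y v assume "(x,u)\<in>G'" "(y,v)\<in>G'"
    then obtain m1 u1 t1 m2 u2 t2 where h: "(m1,u1)\<in>G" "(m2,u2)\<in>G" "x = m1 + t1 *\<^sub>R x0"
      "u = u1 + t1*c" "y = m2 + t2 *\<^sub>R x0" "v = u2 + t2*c" unfolding G'_def by blast
    have "(m1+m2, u1+u2) \<in> G" using h add by blast
    moreover have "x + y = (m1+m2) + (t1+t2) *\<^sub>R x0" "u+v = (u1+u2) + (t1+t2)*c"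
      using h by (simp_all add: algebra_simps)
    ultimately show "(x+y,u+v)\<in>G'" unfolding G'_def by blast
  next
    fix c' x u assume "(x,u)\<in>G'"
    then obtain m1 u1 t1 where h: "(m1,u1)\<in>G" "x = m1 + t1 *\<^sub>R x0" "u = u1 + t1*c"
      unfolding G'_def by blast
    have "(c' *\<^sub>R m1, c'*u1) \<in> G" using h sc by blast
    moreover have "c' *\<^sub>R x = c' *\<^sub>R m1 + (c'*t1) *\<^sub>R x0" "c'*u = c'*u1 + (c'*t1)*c"
      using h by (simp_all add: algebra_simps)
    ultimately show "(c' *\<^sub>R x, c'*u)\<in>G'" unfolding G'_def by blast
  next
    fix x u assume "(x,u)\<in>G'"
    then obtain m t u1 where h: "(m,u1)\<in>G" "x = m + t *\<^sub>R x0" "u = u1 + t*c"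
      unfolding G'_def by blast
    consider "t > 0" | "t = 0" | "t < 0" by linarith
    thus "u \<le> \<phi> x - \<phi> 0"
    proof cases
      case 1
      have "c \<le> (\<phi>(m + t *\<^sub>R x0) - \<phi> 0 - u1)/t" using up h 1 by blast
      hence "t*c \<le> \<phi>(m + t *\<^sub>R x0) - \<phi> 0 - u1" using 1 by (simp add: field_simps)
      thus ?thesis using h by simp
    next
      case 2 thus ?thesis using h dom by simp
    next
      case 3
      have "(\<phi> 0 + u1 - \<phi>(m - (-t) *\<^sub>R x0))/(-t) \<le> c" using lo[of m u1 "-t"] h 3 by linarith
      hence "\<phi> 0 + u1 - \<phi>(m - (-t) *\<^sub>R x0) \<le> (-t)*c" using 3 by (simp add: field_simps)
      thus ?thesis using h by simp
    qed
  qed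
  moreover have "G \<subseteq> G'" unfolding G'_def by force
  moreover have "(x0, c) \<in> G'" unfolding G'_def using G0 by force
  ultimately show ?thesis using x0 by blast
qed

lemma subgradient_exists:
  fixes \<phi> :: "'a::real_vector \<Rightarrow> real"
  assumes C: "cvx \<phi>"
  shows "\<exists>L. linear L \<and> (\<forall>x. L x \<le> \<phi> x - \<phi> 0)"
proof -
  let ?F = "{G. lingraph \<phi> G}"
  have "\<exists>M\<in>?F. \<forall>X\<in>?F. M \<subseteq> X \<longrightarrow> X = M"
  proof (rule Zorn_Lemma2, intro ballI)
    fix Ch assume ch: "Ch \<in> chains ?F"
    show "\<exists>U\<in>?F. \<forall>X\<in>Ch. X \<subseteq> U"
    proof (cases "Ch = {}")
      case True
      have "lingraph \<phi> {(0,0)}" unfolding lingraph_def by auto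
      thus ?thesis using True by blast
    next
      case False
      have sub: "\<And>X. X\<in>Ch \<Longrightarrow> lingraph \<phi> X" using ch unfolding chains_def by blast
      have chn: "\<And>X Y. X\<in>Ch \<Longrightarrow> Y\<in>Ch \<Longrightarrow> X \<subseteq> Y \<or> Y \<subseteq> X"
        using ch unfolding chains_def chain_subset_def by blast
      have "lingraph \<phi> (\<Union>Ch)"
        unfolding lingraph_def
      proof (intro conjI allI impI)
        show "(0,0)\<in>\<Union>Ch" using False sub lingraph_0 by blast
      next
        fix x u v assume "(x,u)\<in>\<Union>Ch" "(x,v)\<in>\<Union>Ch"
        then obtain X Y where XY: "X\<in>Ch" "Y\<in>Ch" "(x,u)\<in>X" "(x,v)\<in>Y" by blast
        show "u = v"
        proof (cases "X \<subseteq> Y")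
          case True thus ?thesis using XY sub[of Y] lingraph_fun[of \<phi> Y x u v] by blast
        next
          case False hence "Y \<subseteq> X" using chn[OF XY(1,2)] by blast
          thus ?thesis using XY sub[of X] lingraph_fun[of \<phi> X x u v] by blast
        qed
      next
        fix x u y v assume "(x,u)\<in>\<Union>Ch" "(y,v)\<in>\<Union>Ch"
        then obtain X Y where XY: "X\<in>Ch" "Y\<in>Ch" "(x,u)\<in>X" "(y,v)\<in>Y" by blast
        show "(x+y,u+v)\<in>\<Union>Ch"
        proof (cases "X \<subseteq> Y")
          case True thus ?thesis using XY sub[of Y] lingraph_add[of \<phi> Y x u y v] by blast
        next
          case False hence "Y \<subseteq> X" using chn[OF XY(1,2)] by blast
          thus ?thesis using XY sub[of X] lingraph_add[of \<phi> X x u y v] by blast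
        qed
      next
        fix c x u assume "(x,u)\<in>\<Union>Ch"
        then obtain X where "X\<in>Ch" "(x,u)\<in>X" by blast
        thus "(c *\<^sub>R x, c*u)\<in>\<Union>Ch" using sub[of X] lingraph_sc[of \<phi> X x u c] by blast
      next
        fix x u assume "(x,u)\<in>\<Union>Ch"
        then obtain X where "X\<in>Ch" "(x,u)\<in>X" by blast
        thus "u \<le> \<phi> x - \<phi> 0" using sub[of X] lingraph_dom[of \<phi> X x u] by blast
      qed
      thus ?thesis by blast
    qed
  qed
  then obtain M where M: "lingraph \<phi> M" and max: "\<And>X. lingraph \<phi> X \<Longrightarrow> M \<subseteq> X \<Longrightarrow> X = M"
    by blast
  have tot: "\<exists>u. (x,u)\<in>M" for x
    using lingraph_extend[OF M C, of x] max by blast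
  have fnc: "(\<forall>x u v. (x,u)\<in>M \<longrightarrow> (x,v)\<in>M \<longrightarrow> u=v)"
   and add: "(\<forall>x u y v. (x,u)\<in>M \<longrightarrow> (y,v)\<in>M \<longrightarrow> (x+y,u+v)\<in>M)"
   and sc: "(\<forall>c x u. (x,u)\<in>M \<longrightarrow> (c *\<^sub>R x, c*u)\<in>M)"
   and dom: "(\<forall>x u. (x,u)\<in>M \<longrightarrow> u \<le> \<phi> x - \<phi> 0)" using M unfolding lingraph_def by blast+
  define L where "L x = (THE u. (x,u)\<in>M)" for x
  have LM: "(x, L x) \<in> M" for x
    unfolding L_def using tot[of x] fnc by (metis theI)
  have eq: "(x,u)\<in>M \<Longrightarrow> L x = u" for x u using LM fnc by blast
  have "linear L"
  proof (rule linearI)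
    fix a b show "L (a+b) = L a + L b" using eq add LM by blast
  next
    fix r b show "L (r *\<^sub>R b) = r *\<^sub>R L b" using eq sc LM by simp
  qed
  moreover have "\<forall>x. L x \<le> \<phi> x - \<phi> 0" using LM dom by blast
  ultimately show ?thesis by blast
qed



lemma SSDB_facts:
  assumes "SSDB s"
  shows "bilinear s" "\<And>x y. s x y = s y x" "\<And>b. bounded_linear (\<lambda>x. s x b)"
    "\<And>b. onorm (\<lambda>x. s x b) = norm b"
    "\<And>f. bounded_linear f \<Longrightarrow> \<exists>b. f = (\<lambda>x. s x b)"
  using assms unfolding SSDB_def SSD_def by auto

lemma SSDB_neg: "SSDB s \<Longrightarrow> SSDB (\<lambda>x y. - s x y)"
proof -
  assume S: "SSDB s"
  have F1: "bilinear s" and F2: "\<And>x y. s x y = s y x" and F3: "\<And>b. bounded_linear (\<lambda>x. s x b)"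
    and F4: "\<And>b. onorm (\<lambda>x. s x b) = norm b"
    and F5: "\<And>f. bounded_linear f \<Longrightarrow> \<exists>b. f = (\<lambda>x. s x b)"
    and F6: "\<exists>x::'a. x \<noteq> 0"
    using S unfolding SSDB_def SSD_def by blast+
  have l1: "linear (\<lambda>y. s x y)" for x using F1 unfolding bilinear_def by blast
  have l2: "linear (\<lambda>x. s x y)" for y using F1 unfolding bilinear_def by blast
  have B: "bilinear (\<lambda>x y. - s x y)"
    unfolding bilinear_def using linear_compose_neg[OF l1] linear_compose_neg[OF l2] by blast
  have Sy: "\<forall>x y. - s x y = - s y x" using F2 by simp
  have BL: "\<forall>b. bounded_linear (\<lambda>x. - s x b)" using bounded_linear_minus[OF F3] by blast
  have ON: "\<forall>b. onorm (\<lambda>x. - s x b) = norm b"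
    using onorm_neg[of "\<lambda>x. s x b" for b] F4 by simp
  have SU: "\<forall>f::'a \<Rightarrow> real. bounded_linear f \<longrightarrow> (\<exists>b. f = (\<lambda>x. - s x b))"
  proof (intro allI impI)
    fix f :: "'a \<Rightarrow> real" assume bf: "bounded_linear f"
    have "bounded_linear (\<lambda>x. - f x)" using bounded_linear_minus[OF bf] .
    then obtain b where "(\<lambda>x. - f x) = (\<lambda>x. s x b)" using F5 by blast
    hence "f = (\<lambda>x. - s x b)" by (metis minus_minus)
    thus "\<exists>b. f = (\<lambda>x. - s x b)" by blast
  qed
  show ?thesis unfolding SSDB_def SSD_def using F6 B Sy BL ON SU by blast
qed

lemma qform_neg_fun: "qform (\<lambda>x y. - s x y) = (\<lambda>b. - qform s b)"
  by (auto simp: qform_def)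

context
  fixes s :: "'a::banach \<Rightarrow> 'a \<Rightarrow> real"
  assumes S: "SSDB s"
begin

lemma bl: "bilinear s" using SSDB_facts[OF S] by blast
lemma s_sym: "s x y = s y x" using SSDB_facts[OF S] by blast

lemma s_add1: "s (x + y) z = s x z + s y z" using bilinear_ladd[OF bl] .
lemma s_add2: "s x (y + z) = s x y + s x z" using bilinear_radd[OF bl] .
lemma s_sub1: "s (x - y) z = s x z - s y z" using bilinear_lsub[OF bl] .
lemma s_sub2: "s z (x - y) = s z x - s z y" using bilinear_rsub[OF bl] .
lemma s_neg1: "s (- x) y = - s x y" using bilinear_lneg[OF bl] .
lemma s_neg2: "s x (- y) = - s x y" using bilinear_rneg[OF bl] .
lemma s_mul1: "s (c *\<^sub>R x) y = c * s x y" using bilinear_lmul[OF bl] by simp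
lemma s_mul2: "s x (c *\<^sub>R y) = c * s x y" using bilinear_rmul[OF bl] by simp
lemma s_zero1: "s 0 y = 0" using s_mul1[of 0] by simp
lemma s_zero2: "s x 0 = 0" using s_mul2[of _ 0] by simp

lemmas s_simps = s_add1 s_add2 s_sub1 s_sub2 s_neg1 s_neg2 s_mul1 s_mul2 s_zero1 s_zero2

lemma q_sub: "qform s (x - y) = qform s x - s x y + qform s y"
  unfolding qform_def by (simp add: s_simps s_sym[of y x] field_simps)
lemma q_add: "qform s (x + y) = qform s x + s x y + qform s y"
  unfolding qform_def by (simp add: s_simps s_sym[of y x] field_simps)
lemma q_neg: "qform s (- x) = qform s x"
  unfolding qform_def by (simp add: s_simps)
lemma q_mul: "qform s (c *\<^sub>R x) = c^2 * qform s x"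
  unfolding qform_def by (simp add: s_simps power2_eq_square)
lemma q_zero: "qform s 0 = 0" unfolding qform_def by (simp add: s_simps)
lemma q_swap: "qform s (x - y) = qform s (y - x)"
  using q_neg[of "x - y"] by simp

lemma s_bound: "\<bar>s x y\<bar> \<le> norm x * norm y"
proof -
  have "norm ((\<lambda>x. s x y) x) \<le> onorm (\<lambda>x. s x y) * norm x"
    using onorm[OF SSDB_facts(3)[OF S]] .
  thus ?thesis using SSDB_facts(4)[OF S, of y] by (simp add: mult.commute)
qed

lemma q_lower: "qform s x \<ge> - ((norm x) ^ 2 / 2)"
  using s_bound[of x x] unfolding qform_def by (simp add: power2_eq_square abs_le_iff)
lemma q_upper: "qform s x \<le> (norm x) ^ 2 / 2"
  using s_bound[of x x] unfolding qform_def by (simp add: power2_eq_square abs_le_iff)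

lemma s_nondeg: assumes "\<And>x. s x z = 0" shows "z = 0"
proof -
  have "(\<lambda>x. s x z) = (\<lambda>x. 0)" using assms by auto
  hence "norm z = 0" using SSDB_facts(4)[OF S, of z] onorm_zero by metis
  thus ?thesis by simp
qed

end

lemma bounded_linear_from_ball:
  fixes L :: "'a::real_normed_vector \<Rightarrow> real"
  assumes L: "linear L" and r: "r > 0" and K: "\<And>x. norm x < r \<Longrightarrow> L x \<le> K"
  shows "bounded_linear L"
proof -
  have K0: "K \<ge> 0" using K[of 0] r linear_0[OF L] by simp
  have "\<bar>L x\<bar> \<le> norm x * (2*K/r)" for x
  proof (cases "x = 0")
    case True thus ?thesis using linear_0[OF L] by simp
  next
    case False
    define c where "c = r / (2 * norm x)"
    have c: "c > 0" using False r by (simp add: c_def)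
    have n: "norm (c *\<^sub>R x) < r" "norm (- (c *\<^sub>R x)) < r"
      using False r by (simp_all add: c_def)
    have "L (c *\<^sub>R x) \<le> K" "L (- (c *\<^sub>R x)) \<le> K" using K n by blast+
    moreover have "L (c *\<^sub>R x) = c * L x" "L (- (c *\<^sub>R x)) = - (c * L x)"
      using linear_scale[OF L] linear_neg[OF L] by simp_all
    ultimately have "c * \<bar>L x\<bar> \<le> K" using c by (simp add: abs_if)
    hence "\<bar>L x\<bar> \<le> K / c" using c by (simp add: field_simps)
    thus ?thesis using False r by (simp add: c_def field_simps)
  qed
  thus ?thesis
    using linear_add[OF L] linear_scale[OF L] by (intro bounded_linear_intro[where K="2*K/r"]) auto
qed

lemma QposD: "Q_positive Q A \<Longrightarrow> b \<in> A \<Longrightarrow> c \<in> A \<Longrightarrow> Q (b - c) \<ge> 0"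
  unfolding Q_positive_def by blast
lemma QposNE: "Q_positive Q A \<Longrightarrow> A \<noteq> {}"
  unfolding Q_positive_def by blast
lemma QposI: "A \<noteq> {} \<Longrightarrow> (\<And>b c. b \<in> A \<Longrightarrow> c \<in> A \<Longrightarrow> Q (b - c) \<ge> 0) \<Longrightarrow> Q_positive Q A"
  unfolding Q_positive_def by blast
lemma maxD1: "max_Q_positive Q A \<Longrightarrow> Q_positive Q A"
  unfolding max_Q_positive_def by blast
lemma maxD2: "max_Q_positive Q A \<Longrightarrow> Q_positive Q A' \<Longrightarrow> A \<subseteq> A' \<Longrightarrow> A' = A"
  unfolding max_Q_positive_def by blast
lemma maxI: "Q_positive Q A \<Longrightarrow> (\<And>A'. Q_positive Q A' \<Longrightarrow> A \<subseteq> A' \<Longrightarrow> A' = A) \<Longrightarrow> max_Q_positive Q A"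
  unfolding max_Q_positive_def by blast

lemma Q_pos_max_mem:
  assumes M: "max_Q_positive Q A" and h: "\<And>a. a \<in> A \<Longrightarrow> Q (b - a) \<ge> 0 \<and> Q (a - b) \<ge> 0"
    and Q0: "Q 0 \<ge> 0"
  shows "b \<in> A"
proof -
  have QA: "Q_positive Q A" using maxD1[OF M] .
  have "Q_positive Q (insert b A)"
  proof (rule QposI)
    fix x y assume "x \<in> insert b A" "y \<in> insert b A"
    thus "Q (x - y) \<ge> 0" using QposD[OF QA, of x y] h[of x] h[of y] Q0 by auto
  qed simp
  hence "insert b A = A" using maxD2[OF M] by blast
  thus ?thesis by blast
qed

lemma Q_pos_translate:
  assumes M: "max_Q_positive Q A"
  shows "max_Q_positive Q ((\<lambda>a. a - x) ` A)"
proof (rule maxI)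
  have QA: "Q_positive Q A" using maxD1[OF M] .
  show "Q_positive Q ((\<lambda>a. a - x) ` A)"
  proof (rule QposI)
    show "(\<lambda>a. a - x) ` A \<noteq> {}" using QposNE[OF QA] by blast
  next
    fix b c assume "b \<in> (\<lambda>a. a - x) ` A" "c \<in> (\<lambda>a. a - x) ` A"
    then obtain b' c' where "b' \<in> A" "c' \<in> A" "b = b' - x" "c = c' - x" by blast
    thus "Q (b - c) \<ge> 0" using QposD[OF QA, of b' c'] by simp
  qed
next
  fix A' assume A': "Q_positive Q A'" "(\<lambda>a. a - x) ` A \<subseteq> A'"
  have "Q_positive Q ((\<lambda>a. a + x) ` A')"
  proof (rule QposI)
    show "(\<lambda>a. a + x) ` A' \<noteq> {}" using QposNE[OF A'(1)] by blast
  next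
    fix b c assume "b \<in> (\<lambda>a. a + x) ` A'" "c \<in> (\<lambda>a. a + x) ` A'"
    then obtain b' c' where "b' \<in> A'" "c' \<in> A'" "b = b' + x" "c = c' + x" by blast
    thus "Q (b - c) \<ge> 0" using QposD[OF A'(1), of b' c'] by simp
  qed
  moreover have "A \<subseteq> (\<lambda>a. a + x) ` A'"
  proof
    fix a assume "a \<in> A"
    hence "a - x \<in> A'" using A'(2) by blast
    hence "(a - x) + x \<in> (\<lambda>a. a + x) ` A'" by blast
    thus "a \<in> (\<lambda>a. a + x) ` A'" by simp
  qed
  ultimately have e: "(\<lambda>a. a + x) ` A' = A" using maxD2[OF M] by blast
  show "A' = (\<lambda>a. a - x) ` A"
  proof -
    have "(\<lambda>a. a - x) ` ((\<lambda>a. a + x) ` A') = A'" by (simp add: image_image)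
    thus ?thesis using e by simp
  qed
qed

lemma Q_pos_extend:
  assumes "Q_positive Q S"
  shows "\<exists>A. max_Q_positive Q A \<and> S \<subseteq> A"
proof -
  let ?F = "{A. Q_positive Q A \<and> S \<subseteq> A}"
  have "\<exists>M\<in>?F. \<forall>X\<in>?F. M \<subseteq> X \<longrightarrow> X = M"
  proof (rule Zorn_Lemma2, intro ballI)
    fix Ch assume ch: "Ch \<in> chains ?F"
    show "\<exists>U\<in>?F. \<forall>X\<in>Ch. X \<subseteq> U"
    proof (cases "Ch = {}")
      case True thus ?thesis using assms by blast
    next
      case False
      have sub: "\<And>X. X\<in>Ch \<Longrightarrow> Q_positive Q X" "\<And>X. X\<in>Ch \<Longrightarrow> S \<subseteq> X"
        using ch unfolding chains_def by blast+
      have chn: "\<And>X Y. X\<in>Ch \<Longrightarrow> Y\<in>Ch \<Longrightarrow> X \<subseteq> Y \<or> Y \<subseteq> X"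
        using ch unfolding chains_def chain_subset_def by blast
      obtain X0 where X0: "X0 \<in> Ch" using False by blast
      have "Q_positive Q (\<Union>Ch)"
      proof (rule QposI)
        show "\<Union>Ch \<noteq> {}" using X0 QposNE[OF sub(1)[OF X0]] by blast
      next
        fix b c assume "b \<in> \<Union>Ch" "c \<in> \<Union>Ch"
        then obtain X Y where XY: "X\<in>Ch" "Y\<in>Ch" "b\<in>X" "c\<in>Y" by blast
        show "Q (b - c) \<ge> 0"
        proof (cases "X \<subseteq> Y")
          case True thus ?thesis using XY QposD[OF sub(1)[OF XY(2)], of b c] by blast
        next
          case False hence "Y \<subseteq> X" using chn[OF XY(1,2)] by blast
          thus ?thesis using XY QposD[OF sub(1)[OF XY(1)], of b c] by blast
        qed
      qed
      moreover have "S \<subseteq> \<Union>Ch" using X0 sub(2)[OF X0] by blast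
      ultimately show ?thesis by blast
    qed
  qed
  then obtain M where M1: "M \<in> ?F" and M2: "\<forall>X\<in>?F. M \<subseteq> X \<longrightarrow> X = M" by (rule bexE)
  have M: "Q_positive Q M \<and> S \<subseteq> M" "\<And>X. Q_positive Q X \<and> S \<subseteq> X \<Longrightarrow> M \<subseteq> X \<Longrightarrow> X = M"
    using M1 apply simp
    using M2 by simp
  have "max_Q_positive Q M"
  proof (rule maxI)
    show "Q_positive Q M" using M(1) by blast
  next
    fix A' assume "Q_positive Q A'" "M \<subseteq> A'"
    moreover have "S \<subseteq> A'" using M(1) \<open>M \<subseteq> A'\<close> by blast
    ultimately show "A' = M" using M(2)[of A'] by simp
  qed
  thus ?thesis using M(1) by blast
qed



lemma sandwich:
  fixes s :: "'a::banach \<Rightarrow> 'a \<Rightarrow> real" and g :: "'a \<Rightarrow> real"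
  assumes S: "SSDB s" and M: "max_Q_positive (qform s) A"
    and G: "cvx g" and r: "r > 0" and Gb: "\<And>x. norm x < r \<Longrightarrow> g x \<le> Mg"
    and Gq: "\<And>b. g b \<ge> - qform s b"
  shows "\<exists>y. \<forall>a\<in>A. \<forall>b. s a y - s b y \<le> qform s a + g b"
proof -
  let ?q = "qform s"
  have QA: "Q_positive ?q A" using M unfolding max_Q_positive_def by blast
  hence Ane: "A \<noteq> {}" unfolding Q_positive_def by blast
  then obtain a0 where a0: "a0 \<in> A" by blast
  define D where "D = {b. bdd_above ((\<lambda>a. s b a - ?q a) ` A)}"
  define \<Psi> where "\<Psi> b = (SUP a\<in>A. s b a - ?q a)" for b
  have upper: "s b a - ?q a \<le> \<Psi> b" if "b \<in> D" "a \<in> A" for a b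
    unfolding \<Psi>_def using that D_def by (intro cSUP_upper) auto
  have least: "\<Psi> b \<le> K" if "\<And>a. a \<in> A \<Longrightarrow> s b a - ?q a \<le> K" for b K
    unfolding \<Psi>_def using that Ane by (intro cSUP_least) auto
  have AD: "a \<in> D \<and> \<Psi> a \<le> ?q a" if "a \<in> A" for a
  proof -
    have *: "s a a' - ?q a' \<le> ?q a" if "a' \<in> A" for a'
      using QA \<open>a \<in> A\<close> that q_sub[OF S, of a a'] unfolding Q_positive_def by force
    hence "a \<in> D" unfolding D_def by (intro CollectI bdd_aboveI2) auto
    thus ?thesis using least * by blast
  qed
  have Psi_ge: "\<Psi> b \<ge> ?q b" if "b \<in> D" for b
  proof (cases "b \<in> A")
    case True
    have "s b b - ?q b = ?q b" unfolding qform_def by simp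
    thus ?thesis using upper[OF that True] by simp
  next
    case False
    have "\<not> (\<forall>a. a \<in> A \<longrightarrow> ?q (b - a) \<ge> 0 \<and> ?q (a - b) \<ge> 0)"
      using Q_pos_max_mem[OF M, of b] False q_zero[OF S] by auto
    then obtain a where a1: "a \<in> A" and a2: "\<not> (?q (b - a) \<ge> 0 \<and> ?q (a - b) \<ge> 0)" by blast
    have a: "a \<in> A" "?q (b - a) < 0" using a1 a2 q_swap[OF S, of a b] by linarith+
    hence "s b a - ?q a > ?q b" using q_sub[OF S, of b a] by simp
    thus ?thesis using upper[OF that a(1)] by simp
  qed
  have lin: "s ((1-u) *\<^sub>R b1 + u *\<^sub>R b2) a = (1-u) * s b1 a + u * s b2 a" for u b1 b2 a
    using s_add1[OF S] s_mul1[OF S] by simp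
  have Dcvx: "(1-u) *\<^sub>R b1 + u *\<^sub>R b2 \<in> D \<and> \<Psi> ((1-u) *\<^sub>R b1 + u *\<^sub>R b2) \<le> (1-u) * \<Psi> b1 + u * \<Psi> b2"
    if "b1 \<in> D" "b2 \<in> D" "0 \<le> u" "u \<le> 1" for b1 b2 u
  proof -
    have *: "s ((1-u) *\<^sub>R b1 + u *\<^sub>R b2) a - ?q a \<le> (1-u) * \<Psi> b1 + u * \<Psi> b2" if "a \<in> A" for a
    proof -
      have "s ((1-u) *\<^sub>R b1 + u *\<^sub>R b2) a - ?q a = (1-u) * (s b1 a - ?q a) + u * (s b2 a - ?q a)"
        unfolding lin by (simp add: algebra_simps)
      also have "\<dots> \<le> (1-u) * \<Psi> b1 + u * \<Psi> b2"
        using upper[OF \<open>b1 \<in> D\<close> that] upper[OF \<open>b2 \<in> D\<close> that] \<open>0 \<le> u\<close> \<open>u \<le> 1\<close>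
        by (intro add_mono mult_left_mono) auto
      finally show ?thesis .
    qed
    hence "(1-u) *\<^sub>R b1 + u *\<^sub>R b2 \<in> D" unfolding D_def by (intro CollectI bdd_aboveI2) auto
    thus ?thesis using least * by blast
  qed
  have gcv: "g ((1-u) *\<^sub>R x + u *\<^sub>R y) \<le> (1-u) * g x + u * g y" if "0 \<le> u" "u \<le> 1" for x y u
    using G that unfolding cvx_def by blast
  have lower: "\<Psi> b + g (b - x) \<ge> - (\<Psi> b2 + g (b2 + x))" if "b \<in> D" "b2 \<in> D" for b b2 x
  proof -
    define m where "m = (1 - 1/2) *\<^sub>R b + (1/2) *\<^sub>R b2"
    have mD: "m \<in> D" "\<Psi> m \<le> (1 - 1/2) * \<Psi> b + (1/2) * \<Psi> b2"
      using Dcvx[OF that, of "1/2"] unfolding m_def by auto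
    have "(1 - 1/2) *\<^sub>R (b - x) + (1/2::real) *\<^sub>R (b2 + x) = m"
      unfolding m_def by (simp add: algebra_simps)
    hence gm: "g m \<le> (1 - 1/2) * g (b - x) + (1/2) * g (b2 + x)"
      using gcv[of "1/2" "b - x" "b2 + x"] by simp
    have "0 \<le> \<Psi> m + g m" using Psi_ge[OF mD(1)] Gq[of m] by linarith
    moreover have "\<Psi> m \<le> \<Psi> b / 2 + \<Psi> b2 / 2" using mD(2) by simp
    moreover have "g m \<le> g (b - x) / 2 + g (b2 + x) / 2" using gm by simp
    ultimately show ?thesis by linarith
  qed
  have a0D: "a0 \<in> D" using AD a0 by blast
  hence Dne: "D \<noteq> {}" by blast
  define \<phi> where "\<phi> x = (INF b\<in>D. \<Psi> b + g (b - x))" for x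
  have bdd: "bdd_below ((\<lambda>b. \<Psi> b + g (b - x)) ` D)" for x
    using lower[OF _ a0D, of _ x] by (intro bdd_belowI2) auto
  have phi_le: "\<phi> x \<le> \<Psi> b + g (b - x)" if "b \<in> D" for b x
    unfolding \<phi>_def using bdd that by (rule cINF_lower)
  have phi0: "\<phi> 0 \<ge> 0"
    unfolding \<phi>_def
  proof (rule cINF_greatest[OF Dne])
    fix b assume "b \<in> D"
    thus "0 \<le> \<Psi> b + g (b - 0)" using Psi_ge[of b] Gq[of b] by simp
  qed
  have "cvx \<phi>"
    unfolding cvx_def
  proof (intro allI impI)
    fix x1 x2 :: "'a" and u :: real
    assume u: "0 \<le> u \<and> u \<le> 1"
    show "\<phi> ((1-u) *\<^sub>R x1 + u *\<^sub>R x2) \<le> (1-u) * \<phi> x1 + u * \<phi> x2"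
    proof (rule field_le_epsilon)
      fix e :: real assume e: "e > 0"
      obtain b1 where b1: "b1 \<in> D" "\<Psi> b1 + g (b1 - x1) < \<phi> x1 + e"
        using cINF_less_iff[OF Dne bdd, of x1 "\<phi> x1 + e"] e unfolding \<phi>_def by auto
      obtain b2 where b2: "b2 \<in> D" "\<Psi> b2 + g (b2 - x2) < \<phi> x2 + e"
        using cINF_less_iff[OF Dne bdd, of x2 "\<phi> x2 + e"] e unfolding \<phi>_def by auto
      define b where "b = (1-u) *\<^sub>R b1 + u *\<^sub>R b2"
      have bD: "b \<in> D" "\<Psi> b \<le> (1-u) * \<Psi> b1 + u * \<Psi> b2"
        using Dcvx[OF b1(1) b2(1)] u unfolding b_def by auto
      have "b - ((1-u) *\<^sub>R x1 + u *\<^sub>R x2) = (1-u) *\<^sub>R (b1 - x1) + u *\<^sub>R (b2 - x2)"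
        unfolding b_def by (simp add: algebra_simps)
      hence gb: "g (b - ((1-u) *\<^sub>R x1 + u *\<^sub>R x2)) \<le> (1-u) * g (b1 - x1) + u * g (b2 - x2)"
        using gcv u by simp
      have "\<phi> ((1-u) *\<^sub>R x1 + u *\<^sub>R x2) \<le> \<Psi> b + g (b - ((1-u) *\<^sub>R x1 + u *\<^sub>R x2))"
        using phi_le[OF bD(1)] .
      also have "\<dots> \<le> (1-u) * (\<Psi> b1 + g (b1 - x1)) + u * (\<Psi> b2 + g (b2 - x2))"
        using bD(2) gb by (simp add: algebra_simps)
      also have "\<dots> \<le> (1-u) * (\<phi> x1 + e) + u * (\<phi> x2 + e)"
        using add_mono[OF mult_left_mono[OF less_imp_le[OF b1(2)]] mult_left_mono[OF less_imp_le[OF b2(2)]]] u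
        by simp
      also have "\<dots> = (1-u) * \<phi> x1 + u * \<phi> x2 + e" by (simp add: algebra_simps)
      finally show "\<phi> ((1-u) *\<^sub>R x1 + u *\<^sub>R x2) \<le> (1-u) * \<phi> x1 + u * \<phi> x2 + e" .
    qed
  qed
  then obtain L where L: "linear L" "\<And>x. L x \<le> \<phi> x - \<phi> 0"
    using subgradient_exists by blast
  have Lb: "L x \<le> ?q a0 + g (2 *\<^sub>R a0) / 2 + Mg / 2" if "norm x < r/2" for x
  proof -
    have "(1 - 1/2) *\<^sub>R (2 *\<^sub>R a0) + (1/2::real) *\<^sub>R ((- 2) *\<^sub>R x) = a0 - x"
      by (simp add: algebra_simps)
    hence "g (a0 - x) \<le> (1 - 1/2) * g (2 *\<^sub>R a0) + (1/2) * g ((- 2) *\<^sub>R x)"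
      using gcv[of "1/2" "2 *\<^sub>R a0" "(- 2) *\<^sub>R x"] by simp
    hence "g (a0 - x) \<le> g (2 *\<^sub>R a0) / 2 + g ((- 2) *\<^sub>R x) / 2" by simp
    moreover have "g ((- 2) *\<^sub>R x) \<le> Mg" using Gb[of "(- 2) *\<^sub>R x"] that by simp
    moreover have "L x \<le> \<Psi> a0 + g (a0 - x)" using L(2)[of x] phi_le[OF a0D, of x] phi0 by linarith
    moreover have "\<Psi> a0 \<le> ?q a0" using AD a0 by blast
    ultimately show ?thesis by linarith
  qed
  have "bounded_linear L"
    using bounded_linear_from_ball[OF L(1), of "r/2"] r Lb by auto
  then obtain y where y: "L = (\<lambda>x. s x y)" using SSDB_facts(5)[OF S] by blast
  have "s a y - s b y \<le> ?q a + g b" if "a \<in> A" for a b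
  proof -
    have "s a y - s b y = L (a - b)" using y s_sub1[OF S] by simp
    also have "\<dots> \<le> \<phi> (a - b)" using L(2) phi0 by (smt (verit))
    also have "\<dots> \<le> \<Psi> a + g (a - (a - b))" using phi_le AD that by blast
    also have "\<dots> \<le> ?q a + g b" using AD that by simp
    finally show ?thesis .
  qed
  thus ?thesis by blast
qed



lemma cvxD: "cvx g \<Longrightarrow> 0 \<le> u \<Longrightarrow> u \<le> 1 \<Longrightarrow> g ((1-u) *\<^sub>R x + u *\<^sub>R y) \<le> (1-u) * g x + u * g y"
  unfolding cvx_def by blast

lemma baire_bound:
  fixes g :: "'a::banach \<Rightarrow> real"
  assumes G: "cvx g" and cl: "\<And>n. closed {x. g x \<le> n}"
  shows "\<exists>M r. r > 0 \<and> (\<forall>x. norm x < r \<longrightarrow> g x \<le> M)"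
proof -
  define Sn where "Sn n = {x. g x \<le> real n} \<inter> ((\<lambda>x. - x) ` {x. g x \<le> real n})" for n :: nat
  have clS: "closed (Sn n)" for n
    unfolding Sn_def by (intro closed_Int cl closed_negations)
  have Sn_iff: "x \<in> Sn n \<longleftrightarrow> g x \<le> real n \<and> g (- x) \<le> real n" for x n
  proof -
    have "x \<in> (\<lambda>x. - x) ` {x. g x \<le> real n} \<longleftrightarrow> g (- x) \<le> real n"
      by (metis (mono_tags, lifting) image_iff mem_Collect_eq minus_minus)
    thus ?thesis unfolding Sn_def by blast
  qed
  have cover: "\<Union>(range Sn) = UNIV"
  proof -
    have "x \<in> \<Union>(range Sn)" for x
    proof -
      obtain n :: nat where "max (g x) (g (- x)) \<le> real n" using real_arch_simple by blast
      hence "x \<in> Sn n" using Sn_iff by simp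
      thus ?thesis by blast
    qed
    thus ?thesis by blast
  qed
  have "\<exists>n. interior (Sn n) \<noteq> {}"
  proof (rule ccontr)
    assume "\<not> (\<exists>n. interior (Sn n) \<noteq> {})"
    hence e: "\<And>n. interior (Sn n) = {}" by blast
    have "euclidean interior_of \<Union>(range Sn) = {}"
    proof (rule Baire_category_alt)
      show "completely_metrizable_space (euclidean :: 'a topology) \<or> locally_compact_space (euclidean :: 'a topology) \<and> regular_space (euclidean :: 'a topology)"
        using completely_metrizable_space_euclidean by blast
      show "countable (range Sn)" by simp
      fix T assume "T \<in> range Sn"
      then obtain n where "T = Sn n" by blast
      thus "closedin euclidean T \<and> euclidean interior_of T = {}"
        using clS[of n] e[of n] closed_closedin by auto
    qed
    hence "interior (UNIV :: 'a set) = {}" using cover by simp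
    thus False by simp
  qed
  then obtain n p where "p \<in> interior (Sn n)" by blast
  then obtain e where e: "e > 0" "ball p e \<subseteq> Sn n" using mem_interior by blast
  have "g u \<le> real n" if "norm u < e" for u
  proof -
    have "p + u \<in> ball p e" "p - u \<in> ball p e" using that by (auto simp: dist_norm)
    hence g1: "g (p + u) \<le> real n" and g2: "g (- (p - u)) \<le> real n" using e(2) Sn_iff by blast+
    have "(1 - 1/2) *\<^sub>R (p + u) + (1/2::real) *\<^sub>R (- (p - u)) = u"
      by (simp add: algebra_simps) (simp add: scaleR_add_left[symmetric])
    moreover have "g ((1 - 1/2) *\<^sub>R (p + u) + (1/2::real) *\<^sub>R (- (p - u))) \<le> (1 - 1/2) * g (p + u) + (1/2) * g (- (p - u))"
      by (rule cvxD[OF G]) simp_all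
    ultimately have "g u \<le> g (p + u) / 2 + g (- (p - u)) / 2" by simp
    thus ?thesis using g1 g2 by simp
  qed
  thus ?thesis using e(1) by blast
qed

lemma cvx_normsq: "cvx (\<lambda>b::'a::real_normed_vector. (norm b) ^ 2 / 2)"
  unfolding cvx_def
proof (intro allI impI)
  fix x y :: 'a and u :: real assume u: "0 \<le> u \<and> u \<le> 1"
  have n: "norm ((1-u) *\<^sub>R x + u *\<^sub>R y) \<le> (1-u) * norm x + u * norm y"
    using norm_triangle_ineq[of "(1-u) *\<^sub>R x" "u *\<^sub>R y"] u by simp
  have "(norm ((1-u) *\<^sub>R x + u *\<^sub>R y)) ^ 2 \<le> ((1-u) * norm x + u * norm y) ^ 2"
    using n by (intro power_mono) auto
  also have "\<dots> \<le> (1-u) * (norm x) ^ 2 + u * (norm y) ^ 2"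
  proof -
    have "(1-u) * (norm x) ^ 2 + u * (norm y) ^ 2 - ((1-u) * norm x + u * norm y) ^ 2
        = u * (1-u) * (norm x - norm y) ^ 2" by (simp add: power2_eq_square algebra_simps)
    moreover have "u * (1-u) * (norm x - norm y) ^ 2 \<ge> 0" using u by simp
    ultimately show ?thesis by linarith
  qed
  finally show "(norm ((1-u) *\<^sub>R x + u *\<^sub>R y)) ^ 2 / 2 \<le> (1-u) * ((norm x) ^ 2 / 2) + u * ((norm y) ^ 2 / 2)"
    by simp
qed

lemma lemR:
  fixes s :: "'a::banach \<Rightarrow> 'a \<Rightarrow> real"
  assumes S: "SSDB s" and M: "max_Q_positive (qform s) A"
  shows "\<exists>a\<in>A. qform s a + (norm a) ^ 2 / 2 = 0"
proof -
  let ?q = "qform s"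
  have h1: "(norm x) ^ 2 / 2 \<le> 1/2" if "norm x < 1" for x :: 'a
  proof -
    have "(norm x) ^ 2 \<le> 1" using that by (simp add: power_le_one)
    thus ?thesis by simp
  qed
  have h2: "(norm b) ^ 2 / 2 \<ge> - ?q b" for b using q_lower[OF S, of b] by linarith
  obtain y where y0: "\<forall>a\<in>A. \<forall>b. s a y - s b y \<le> ?q a + (norm b) ^ 2 / 2"
    using sandwich[OF S M cvx_normsq zero_less_one h1 h2] by blast
  hence y: "\<And>a b. a \<in> A \<Longrightarrow> s a y - s b y \<le> ?q a + (norm b) ^ 2 / 2" by blast
  have K: "s a y - ?q a \<le> - ((norm y) ^ 2 / 2)" if a: "a \<in> A" for a
  proof (rule ccontr)
    define Ka where "Ka = s a y - ?q a"
    assume "\<not> s a y - ?q a \<le> - ((norm y) ^ 2 / 2)"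
    hence Kgt: "Ka > - ((norm y) ^ 2 / 2)" unfolding Ka_def by simp
    have Kb: "Ka \<le> s b y + (norm b) ^ 2 / 2" for b using y[OF a, of b] unfolding Ka_def by simp
    show False
    proof (cases "y = 0")
      case True thus False using Kb[of 0] Kgt by (simp add: s_zero1[OF S])
    next
      case False
      hence ny: "norm y > 0" by simp
      define \<delta> where "\<delta> = Ka + (norm y) ^ 2 / 2"
      have d: "\<delta> > 0" using Kgt unfolding \<delta>_def by simp
      define \<epsilon> where "\<epsilon> = min (norm y / 2) (\<delta> / (2 * norm y))"
      have ep: "\<epsilon> > 0" "\<epsilon> \<le> norm y / 2" "\<epsilon> * norm y \<le> \<delta> / 2"
        using ny d by (auto simp: \<epsilon>_def min_def field_simps)
      have "\<exists>x. \<bar>s x y\<bar> > (norm y - \<epsilon>) * norm x"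
      proof (rule ccontr)
        assume "\<not> ?thesis"
        hence "\<And>x. norm ((\<lambda>x. s x y) x) \<le> (norm y - \<epsilon>) * norm x" by (simp add: not_less)
        hence "onorm (\<lambda>x. s x y) \<le> norm y - \<epsilon>" using ep by (intro onorm_bound) auto
        thus False using SSDB_facts(4)[OF S, of y] ep by simp
      qed
      then obtain x where x: "\<bar>s x y\<bar> > (norm y - \<epsilon>) * norm x" by blast
      have xnz: "x \<noteq> 0" using x ep by (auto simp: s_zero1[OF S])
      define x' where "x' = (if s x y < 0 then x else - x)"
      have x'1: "s x' y = - \<bar>s x y\<bar>" "norm x' = norm x"
        unfolding x'_def by (auto simp: s_neg1[OF S])
      define b where "b = (norm y / norm x) *\<^sub>R x'"
      have nb: "norm b = norm y" unfolding b_def using xnz x'1 by simp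
      have sb: "s b y = (norm y / norm x) * (- \<bar>s x y\<bar>)"
        unfolding b_def using s_mul1[OF S] x'1 by simp
      have "(norm y / norm x) * \<bar>s x y\<bar> > (norm y / norm x) * ((norm y - \<epsilon>) * norm x)"
        using x xnz ny by (intro mult_strict_left_mono) auto
      hence "(norm y / norm x) * \<bar>s x y\<bar> > norm y * (norm y - \<epsilon>)" using xnz by simp
      hence "s b y < - (norm y * (norm y - \<epsilon>))" using sb by simp
      hence "s b y + (norm b) ^ 2 / 2 < - ((norm y) ^ 2 / 2) + \<epsilon> * norm y"
        using nb by (simp add: power2_eq_square algebra_simps)
      also have "\<dots> < Ka" using ep d \<delta>_def by linarith
      finally show False using Kb[of b] by simp
    qed
  qed
  have yA: "y \<in> A"
  proof (rule Q_pos_max_mem[OF M])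
    show "?q 0 \<ge> 0" using q_zero[OF S] by simp
  next
    fix a assume a: "a \<in> A"
    have "?q (y - a) = ?q y - (s a y - ?q a)" using q_sub[OF S, of y a] s_sym[OF S, of y a] by simp
    hence "?q (y - a) \<ge> 0" using K[OF a] q_lower[OF S, of y] by linarith
    thus "?q (y - a) \<ge> 0 \<and> ?q (a - y) \<ge> 0" using q_swap[OF S, of a y] by simp
  qed
  have "s y y - ?q y = ?q y" unfolding qform_def by simp
  hence "?q y + (norm y) ^ 2 / 2 \<le> 0" using K[OF yA] by linarith
  hence "?q y + (norm y) ^ 2 / 2 = 0" using q_lower[OF S, of y] by linarith
  thus ?thesis using yA by blast
qed

lemma lemR_gen:
  fixes s :: "'a::banach \<Rightarrow> 'a \<Rightarrow> real"
  assumes S: "SSDB s" and M: "max_Q_positive (qform s) A"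
  shows "\<exists>a\<in>A. qform s (a - x) + (norm (a - x)) ^ 2 / 2 = 0"
proof -
  obtain a' where "a' \<in> (\<lambda>a. a - x) ` A" "qform s a' + (norm a') ^ 2 / 2 = 0"
    using lemR[OF S Q_pos_translate[OF M, of x]] by blast
  thus ?thesis by blast
qed



lemma core12:
  fixes s :: "'a::banach \<Rightarrow> 'a \<Rightarrow> real"
  assumes S: "SSDB s" and M: "max_Q_positive (qform s) A"
    and MC: "max_Q_positive (\<lambda>b. - qform s b) C" and fin: "\<forall>x. Phi_negq s C x < \<infinity>"
  shows "\<exists>y\<in>A. - y \<in> C"
proof -
  let ?q = "qform s"
  have QC: "Q_positive (\<lambda>b. - ?q b) C" using maxD1[OF MC] .
  have Cne: "C \<noteq> {}" using QposNE[OF QC] .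
  then obtain c0 where c0: "c0 \<in> C" by blast
  have bddC: "bdd_above ((\<lambda>c. s b c + ?q c) ` C)" for b
  proof -
    let ?P = "Phi_negq s C (- b)"
    have le: "ereal (s b c + ?q c) \<le> ?P" if "c \<in> C" for c
    proof -
      have "ereal (- s (- b) c + ?q c) \<le> ?P" unfolding Phi_negq_def using that by (rule SUP_upper)
      thus ?thesis using s_neg1[OF S, of b c] by simp
    qed
    have "?P \<noteq> \<infinity>" using fin by auto
    moreover have "?P \<noteq> -\<infinity>" using le[OF c0] by auto
    ultimately obtain R where R: "?P = ereal R" by (cases ?P) auto
    have "s b c + ?q c \<le> R" if "c \<in> C" for c using le[OF that] R by simp
    thus ?thesis by (intro bdd_aboveI2) 
  qed
  define g where "g b = (SUP c\<in>C. s b c + ?q c)" for b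
  have gup: "s b c + ?q c \<le> g b" if "c \<in> C" for b c
    unfolding g_def using that bddC by (rule cSUP_upper)
  have gle: "g b \<le> K" if "\<And>c. c \<in> C \<Longrightarrow> s b c + ?q c \<le> K" for b K
    unfolding g_def using Cne that by (rule cSUP_least)
  have lin: "s ((1-u) *\<^sub>R b1 + u *\<^sub>R b2) c = (1-u) * s b1 c + u * s b2 c" for u b1 b2 c
    using s_add1[OF S] s_mul1[OF S] by simp
  have G: "cvx g" unfolding cvx_def
  proof (intro allI impI)
    fix b1 b2 :: 'a and u :: real assume u: "0 \<le> u \<and> u \<le> 1"
    show "g ((1-u) *\<^sub>R b1 + u *\<^sub>R b2) \<le> (1-u) * g b1 + u * g b2"
    proof (rule gle)
      fix c assume c: "c \<in> C"
      have "s ((1-u) *\<^sub>R b1 + u *\<^sub>R b2) c + ?q c = (1-u) * (s b1 c + ?q c) + u * (s b2 c + ?q c)"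
        unfolding lin by (simp add: algebra_simps)
      also have "\<dots> \<le> (1-u) * g b1 + u * g b2"
        using add_mono[OF mult_left_mono[OF gup[OF c, of b1]] mult_left_mono[OF gup[OF c, of b2]]] u
        by simp
      finally show "s ((1-u) *\<^sub>R b1 + u *\<^sub>R b2) c + ?q c \<le> (1-u) * g b1 + u * g b2" .
    qed
  qed
  have cl: "closed {x. g x \<le> n}" for n
  proof -
    have "{x. g x \<le> n} = (\<Inter>c\<in>C. {x. s x c + ?q c \<le> n})"
    proof (intro equalityI subsetI)
      fix x assume "x \<in> {x. g x \<le> n}"
      thus "x \<in> (\<Inter>c\<in>C. {x. s x c + ?q c \<le> n})" using gup[of _ x] by force
    next
      fix x assume "x \<in> (\<Inter>c\<in>C. {x. s x c + ?q c \<le> n})"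
      thus "x \<in> {x. g x \<le> n}" using gle[of x n] by blast
    qed
    moreover have "closed {x. s x c + ?q c \<le> n}" for c
    proof (rule closed_Collect_le)
      show "continuous_on UNIV (\<lambda>x. s x c + ?q c)"
        using linear_continuous_on[OF SSDB_facts(3)[OF S, of c]] by (intro continuous_intros)
      show "continuous_on UNIV (\<lambda>x. n)" by (rule continuous_on_const)
    qed
    ultimately show ?thesis by (simp add: closed_INT)
  qed
  obtain Mg r where Mr: "r > 0" "\<And>x. norm x < r \<Longrightarrow> g x \<le> Mg" using baire_bound[OF G cl] by blast
  have Gq: "g b \<ge> - ?q b" for b
  proof (cases "- b \<in> C")
    case True
    have "s b (- b) = - (2 * ?q b)" using s_neg2[OF S, of b b] unfolding qform_def by simp
    hence "s b (- b) + ?q (- b) = - ?q b" using q_neg[OF S, of b] by simp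
    thus ?thesis using gup[OF True, of b] by simp
  next
    case False
    have "\<not> (\<forall>c. c \<in> C \<longrightarrow> - ?q (- b - c) \<ge> 0 \<and> - ?q (c - - b) \<ge> 0)"
      using Q_pos_max_mem[OF MC, of "- b"] False q_zero[OF S] by auto
    then obtain c where c1: "c \<in> C" and c2: "\<not> (- ?q (- b - c) \<ge> 0 \<and> - ?q (c - - b) \<ge> 0)" by blast
    have "?q (c - - b) = ?q (- b - c)" using q_swap[OF S, of c "- b"] .
    hence "?q (- b - c) > 0" using c2 by linarith
    moreover have "?q (- b - c) = ?q b + s b c + ?q c"
    proof -
      have "- b - c = - (b + c)" by simp
      hence "?q (- b - c) = ?q (b + c)" using q_neg[OF S, of "b + c"] by simp
      thus ?thesis using q_add[OF S] by simp
    qed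
    ultimately have "s b c + ?q c > - ?q b" by linarith
    thus ?thesis using gup[OF c1, of b] by linarith
  qed
  obtain y where y0: "\<forall>a\<in>A. \<forall>b. s a y - s b y \<le> ?q a + g b"
    using sandwich[OF S M G Mr Gq] by blast
  have gC: "g (- c) \<le> - ?q c" if c: "c \<in> C" for c
  proof (rule gle)
    fix c' assume c': "c' \<in> C"
    have "- ?q (c - c') \<ge> 0" using QposD[OF QC c c'] .
    moreover have "?q (c - c') = ?q c - s c c' + ?q c'" using q_sub[OF S] .
    moreover have "s (- c) c' = - s c c'" using s_neg1[OF S] .
    ultimately show "s (- c) c' + ?q c' \<le> - ?q c" by linarith
  qed
  have H: "(s a y - ?q a) + (s c y + ?q c) \<le> 0" if "a \<in> A" "c \<in> C" for a c
  proof -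
    have "s a y - s (- c) y \<le> ?q a + g (- c)" using y0 that(1) by blast
    thus ?thesis using gC[OF that(2)] s_neg1[OF S, of c y] by linarith
  qed
  have qyy: "s y y = 2 * ?q y" unfolding qform_def by simp
  have memA: "y \<in> A" if h: "\<And>a. a \<in> A \<Longrightarrow> s a y - ?q a \<le> ?q y"
  proof (rule Q_pos_max_mem[OF M])
    show "?q 0 \<ge> 0" using q_zero[OF S] by simp
  next
    fix a assume a: "a \<in> A"
    have "?q (y - a) = ?q y - (s a y - ?q a)" using q_sub[OF S, of y a] s_sym[OF S, of y a] by simp
    hence "?q (y - a) \<ge> 0" using h[OF a] by linarith
    thus "?q (y - a) \<ge> 0 \<and> ?q (a - y) \<ge> 0" using q_swap[OF S, of a y] by simp
  qed
  have memC: "- y \<in> C" if h: "\<And>c. c \<in> C \<Longrightarrow> s c y + ?q c \<le> - ?q y"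
  proof (rule Q_pos_max_mem[OF MC])
    show "- ?q 0 \<ge> 0" using q_zero[OF S] by simp
  next
    fix c assume c: "c \<in> C"
    have "- y - c = - (y + c)" by simp
    hence "?q (- y - c) = ?q (y + c)" using q_neg[OF S, of "y + c"] by simp
    hence "?q (- y - c) = ?q y + (s c y + ?q c)" using q_add[OF S, of y c] s_sym[OF S, of y c] by simp
    hence "- ?q (- y - c) \<ge> 0" using h[OF c] by linarith
    thus "- ?q (- y - c) \<ge> 0 \<and> - ?q (c - - y) \<ge> 0" using q_swap[OF S, of c "- y"] by simp
  qed
  have negy: "s (- y) y + ?q (- y) = - ?q y" using s_neg1[OF S, of y y] q_neg[OF S, of y] qyy by simp
  have allA: "\<forall>a\<in>A. s a y - ?q a \<le> ?q y"
  proof (rule ccontr)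
    assume "\<not> ?thesis"
    then obtain a0 where a0: "a0 \<in> A" "s a0 y - ?q a0 > ?q y" by force
    have "s c y + ?q c \<le> - ?q y" if "c \<in> C" for c using H[OF a0(1) that] a0(2) by linarith
    hence yC: "- y \<in> C" by (rule memC)
    have "s (- y) y + ?q (- y) < - ?q y" using H[OF a0(1) yC] a0(2) by linarith
    thus False using negy by linarith
  qed
  hence yA: "y \<in> A" using memA by blast
  have allC: "\<forall>c\<in>C. s c y + ?q c \<le> - ?q y"
  proof (rule ccontr)
    assume "\<not> ?thesis"
    then obtain c1 where c1: "c1 \<in> C" "s c1 y + ?q c1 > - ?q y" by force
    have "s y y - ?q y = ?q y" using qyy by simp
    thus False using H[OF yA c1(1)] c1(2) by linarith
  qed
  hence "- y \<in> C" using memC by blast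
  thus ?thesis using yA by blast
qed

lemma core12_gen:
  fixes s :: "'a::banach \<Rightarrow> 'a \<Rightarrow> real"
  assumes S: "SSDB s" and M: "max_Q_positive (qform s) A"
    and MC: "max_Q_positive (\<lambda>b. - qform s b) C" and fin: "\<forall>x. Phi_negq s C x < \<infinity>"
  shows "setsum A C = UNIV"
proof -
  have "x \<in> setsum A C" for x
  proof -
    obtain y where y: "y \<in> (\<lambda>a. a - x) ` A" "- y \<in> C"
      using core12[OF S Q_pos_translate[OF M, of x] MC fin] by blast
    then obtain a where a: "a \<in> A" "y = a - x" by blast
    have "x = a + (- y)" using a by simp
    thus ?thesis unfolding setsum_def using a(1) y(2) by blast
  qed
  thus ?thesis by blast
qed

lemma lem31:
  assumes QA: "Q_positive Q A" and sum: "setsum A C = UNIV" and p: "p \<in> C"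
    and pt: "\<forall>z\<in>C - {p}. Q (z - p) < 0"
  shows "max_Q_positive Q A"
proof (rule maxI[OF QA])
  fix A' assume A': "Q_positive Q A'" "A \<subseteq> A'"
  have "A' \<subseteq> A"
  proof
    fix b assume b: "b \<in> A'"
    have "b + p \<in> setsum A C" using sum by simp
    then obtain a c where ac: "a \<in> A" "c \<in> C" "b + p = a + c" unfolding setsum_def by blast
    have e: "b - a = c - p" using ac(3) by (simp add: algebra_simps)
    have "Q (b - a) \<ge> 0" using QposD[OF A'(1) b] A'(2) ac(1) by blast
    hence "\<not> Q (c - p) < 0" using e by simp
    hence "c = p" using pt ac(2) by blast
    thus "b \<in> A" using ac by simp
  qed
  thus "A' = A" using A'(2) by blast
qed



lemma lemP:
  fixes s :: "'a::banach \<Rightarrow> 'a \<Rightarrow> real"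
  assumes S: "SSDB s"
  shows "\<exists>A. max_Q_positive (qform s) A \<and> {a. qform s a = (norm a) ^ 2 / 2} \<subseteq> A \<and> 0 \<in> A
           \<and> (\<forall>a\<in>A. a \<noteq> 0 \<longrightarrow> qform s a > 0)"
proof -
  let ?q = "qform s"
  define A0 where "A0 = {a. ?q a = (norm a) ^ 2 / 2}"
  have 00: "0 \<in> A0" using q_zero[OF S] unfolding A0_def by simp
  have A0pos: "Q_positive ?q A0"
  proof (rule QposI)
    show "A0 \<noteq> {}" using 00 by blast
  next
    fix b c assume "b \<in> A0" "c \<in> A0"
    hence e: "?q (b - c) = (norm b) ^ 2 / 2 - s b c + (norm c) ^ 2 / 2"
      using q_sub[OF S, of b c] unfolding A0_def by simp
    have "s b c \<le> norm b * norm c" using s_bound[OF S, of b c] by simp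
    moreover have "(norm b) ^ 2 / 2 + (norm c) ^ 2 / 2 - norm b * norm c = (norm b - norm c) ^ 2 / 2"
      by (simp add: power2_eq_square algebra_simps)
    moreover have "(norm b - norm c) ^ 2 / 2 \<ge> 0" by simp
    ultimately show "?q (b - c) \<ge> 0" using e by linarith
  qed
  obtain A where A: "max_Q_positive ?q A" "A0 \<subseteq> A" using Q_pos_extend[OF A0pos] by blast
  have QA: "Q_positive ?q A" using maxD1[OF A(1)] .
  have 0: "0 \<in> A" using A(2) 00 by blast
  have pos: "?q z > 0" if z: "z \<in> A" "z \<noteq> 0" for z
  proof (rule ccontr)
    assume nz: "\<not> ?q z > 0"
    have "?q z \<ge> 0" using QposD[OF QA z(1) 0] by simp
    hence qz: "?q z = 0" using nz by linarith
    have sA0: "s z a0 = 0" if a0: "a0 \<in> A0" for a0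
    proof (rule ccontr)
      define k where "k = s z a0"
      assume "s z a0 \<noteq> 0"
      hence k: "k \<noteq> 0" unfolding k_def .
      have a0nz: "a0 \<noteq> 0" using k s_zero2[OF S] unfolding k_def by auto
      define n where "n = (norm a0) ^ 2"
      have n: "n > 0" using a0nz unfolding n_def by simp
      define t where "t = k / n"
      have qa0: "?q a0 = n / 2" using a0 unfolding A0_def n_def by simp
      have tA0: "t *\<^sub>R a0 \<in> A0"
      proof -
        have "?q (t *\<^sub>R a0) = t ^ 2 * (n / 2)" using q_mul[OF S, of t a0] qa0 by simp
        also have "\<dots> = (norm (t *\<^sub>R a0)) ^ 2 / 2" unfolding n_def by (simp add: power_mult_distrib)
        finally show ?thesis unfolding A0_def by simp
      qed
      have "?q (z - t *\<^sub>R a0) \<ge> 0" using QposD[OF QA z(1)] tA0 A(2) by blast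
      moreover have "?q (z - t *\<^sub>R a0) = - (t * k) + t ^ 2 * (n / 2)"
        using q_sub[OF S, of z "t *\<^sub>R a0"] qz q_mul[OF S, of t a0] qa0 s_mul2[OF S, of z t a0]
        unfolding k_def by simp
      moreover have "- (t * k) + t ^ 2 * (n / 2) = - (k ^ 2 / (2 * n))"
        using n unfolding t_def by (simp add: power2_eq_square field_simps)
      moreover have "k ^ 2 / (2 * n) > 0" using k n by simp
      ultimately show False by linarith
    qed
    define s' where "s' = (\<lambda>x y. - s x y)"
    have S': "SSDB s'" unfolding s'_def using SSDB_neg[OF S] .
    have q': "qform s' = (\<lambda>b. - ?q b)" unfolding s'_def by (rule qform_neg_fun)
    define Z where "Z = range (\<lambda>t::real. t *\<^sub>R z)"
    have Zpos: "Q_positive (qform s') Z"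
    proof (rule QposI)
      show "Z \<noteq> {}" unfolding Z_def by blast
    next
      fix b c assume "b \<in> Z" "c \<in> Z"
      then obtain t t' where "b = t *\<^sub>R z" "c = t' *\<^sub>R z" unfolding Z_def by blast
      hence "b - c = (t - t') *\<^sub>R z" by (simp add: algebra_simps)
      thus "qform s' (b - c) \<ge> 0" unfolding q' using q_mul[OF S, of "t - t'" z] qz by simp
    qed
    obtain D where D: "max_Q_positive (qform s') D" "Z \<subseteq> D" using Q_pos_extend[OF Zpos] by blast
    have QD: "Q_positive (qform s') D" using maxD1[OF D(1)] .
    have sD: "s d z = 0" if d: "d \<in> D" for d
    proof (rule ccontr)
      assume h: "s d z \<noteq> 0"
      define t where "t = (?q d - 1) / s d z"
      have "t *\<^sub>R z \<in> D" using D(2) unfolding Z_def by blast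
      hence "qform s' (d - t *\<^sub>R z) \<ge> 0" using QposD[OF QD d] by blast
      moreover have "qform s' (d - t *\<^sub>R z) = - ?q d + t * s d z"
        unfolding q' using q_sub[OF S, of d "t *\<^sub>R z"] q_mul[OF S, of t z] qz s_mul2[OF S, of d t z]
        by simp
      moreover have "t * s d z = ?q d - 1" using h unfolding t_def by simp
      ultimately show False by linarith
    qed
    have "s x z = 0" for x
    proof -
      obtain d where d: "d \<in> D" "qform s' (d - x) + (norm (d - x)) ^ 2 / 2 = 0"
        using lemR_gen[OF S' D(1)] by blast
      hence "?q (d - x) = (norm (d - x)) ^ 2 / 2" unfolding q' by simp
      hence "d - x \<in> A0" unfolding A0_def by simp
      hence "s z (d - x) = 0" using sA0 by blast
      moreover have "s z d = 0" using sD[OF d(1)] s_sym[OF S, of z d] by simp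
      ultimately have "s z x = 0" using s_sub2[OF S, of z d x] by simp
      thus ?thesis using s_sym[OF S, of x z] by simp
    qed
    hence "z = 0" by (rule s_nondeg[OF S])
    thus False using z(2) by simp
  qed
  show ?thesis using A 0 pos unfolding A0_def by blast
qed

theorem mainTheorem14:
  fixes s :: "'a::banach \<Rightarrow> 'a \<Rightarrow> real" and A :: "'a set"
  assumes "SSDB s"
    and "Q_positive (qform s) A"
  shows "(max_Q_positive (qform s) A
            \<longleftrightarrow> (\<forall>C. max_Q_positive (\<lambda>b. - qform s b) C
                       \<and> (\<forall>x. Phi_negq s C x < \<infinity>)
                     \<longrightarrow> setsum A C = UNIV))
       \<and> (max_Q_positive (qform s) A
            \<longleftrightarrow> (\<exists>C p. setsum A C = UNIV \<and> p \<in> C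
                       \<and> (\<forall>z\<in>C - {p}. qform s (z - p) < 0)))"
proof -
  note S = assms(1)
  let ?q = "qform s"
  define s' where "s' = (\<lambda>x y. - s x y)"
  have S': "SSDB s'" unfolding s'_def using SSDB_neg[OF S] .
  have q': "qform s' = (\<lambda>b. - ?q b)" unfolding s'_def by (rule qform_neg_fun)
  obtain C where C: "max_Q_positive (qform s') C" "{a. qform s' a = (norm a) ^ 2 / 2} \<subseteq> C" "0 \<in> C"
      "\<forall>a\<in>C. a \<noteq> 0 \<longrightarrow> qform s' a > 0"
    using lemP[OF S'] by blast
  have C1: "max_Q_positive (\<lambda>b. - ?q b) C" using C(1) unfolding q' .
  have C2: "\<And>c. - ?q c = (norm c) ^ 2 / 2 \<Longrightarrow> c \<in> C" using C(2) unfolding q' by blast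
  have C4: "\<And>a. a \<in> C \<Longrightarrow> a \<noteq> 0 \<Longrightarrow> ?q a < 0" using C(4) unfolding q' by force
  obtain Ah where Ah: "max_Q_positive ?q Ah" "0 \<in> Ah" "\<forall>a\<in>Ah. a \<noteq> 0 \<longrightarrow> ?q a > 0"
    using lemP[OF S] by blast
  have CC0: "?q z = - ((norm z) ^ 2 / 2)" if z: "z \<in> C" for z
  proof -
    obtain a where a: "a \<in> Ah" "?q (a - z) + (norm (a - z)) ^ 2 / 2 = 0"
      using lemR_gen[OF S Ah(1)] by blast
    have "- ?q (z - a) = (norm (z - a)) ^ 2 / 2"
      using a(2) q_swap[OF S, of a z] norm_minus_commute[of a z] by simp
    hence w: "z - a \<in> C" using C2 by blast
    have "- ?q (z - (z - a)) \<ge> 0" using QposD[OF maxD1[OF C1] z w] .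
    hence "?q a \<le> 0" by simp
    hence "a = 0" using Ah(3) a(1) by force
    thus ?thesis using a(2) q_neg[OF S, of z] by simp
  qed
  have fin: "\<forall>x. Phi_negq s C x < \<infinity>"
  proof
    fix x
    have "Phi_negq s C x \<le> ereal ((norm x) ^ 2 / 2)"
      unfolding Phi_negq_def
    proof (rule SUP_least)
      fix c assume c: "c \<in> C"
      have "- s x c \<le> norm x * norm c" using s_bound[OF S, of x c] by linarith
      moreover have "norm x * norm c - (norm c) ^ 2 / 2 \<le> (norm x) ^ 2 / 2"
      proof -
        have "(norm x - norm c) ^ 2 \<ge> 0" by simp
        thus ?thesis by (simp add: power2_eq_square algebra_simps)
      qed
      ultimately show "ereal (- s x c + ?q c) \<le> ereal ((norm x) ^ 2 / 2)" using CC0[OF c] by simp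
    qed
    moreover have "ereal ((norm x) ^ 2 / 2) < \<infinity>" by simp
    ultimately show "Phi_negq s C x < \<infinity>" by (rule le_less_trans)
  qed
  have pt: "\<forall>z\<in>C - {0}. ?q (z - 0) < 0" using C4 by simp
  show ?thesis
  proof (intro conjI iffI)
    assume m: "max_Q_positive ?q A"
    show "\<forall>C. max_Q_positive (\<lambda>b. - ?q b) C \<and> (\<forall>x. Phi_negq s C x < \<infinity>) \<longrightarrow> setsum A C = UNIV"
      using core12_gen[OF S m] by blast
  next
    assume h: "\<forall>C. max_Q_positive (\<lambda>b. - ?q b) C \<and> (\<forall>x. Phi_negq s C x < \<infinity>) \<longrightarrow> setsum A C = UNIV"
    hence "setsum A C = UNIV" using C1 fin by blast
    thus "max_Q_positive ?q A" using lem31[OF assms(2) _ C(3) pt] by blast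
  next
    assume m: "max_Q_positive ?q A"
    have "setsum A C = UNIV" using core12_gen[OF S m C1 fin] .
    thus "\<exists>C p. setsum A C = UNIV \<and> p \<in> C \<and> (\<forall>z\<in>C - {p}. ?q (z - p) < 0)"
      using C(3) pt by blast
  next
    assume "\<exists>C p. setsum A C = UNIV \<and> p \<in> C \<and> (\<forall>z\<in>C - {p}. ?q (z - p) < 0)"
    then obtain C p where "setsum A C = UNIV" "p \<in> C" "\<forall>z\<in>C - {p}. ?q (z - p) < 0" by blast
    thus "max_Q_positive ?q A" using lem31[OF assms(2)] by blast
  qed
qed


end
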